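(* Let $k,n\in\mathbb N$ and $U\subset\mathrm{Sym}_n$. Let $\mathcal O(U)$ be the set of orbits of $\langle U\rangle$ on $\{1,\dots,n\}$. Then the number of involutions $\pi\in\mathrm{Sym}_n$ such that - $\pi$ commutes with every element of $U$, and - the induced action of $\pi$ on $\mathcal O(U)$ has exactly $k$ orbits of size $2$ is at most $2^n\,|\mathrm{Inv}_{|\mathcal O(U)|,k}|$.
   Context: Involutions here include the identity, i.e. all $\pi$ with $\pi^2=1$. A permutation commuting with $\langle U\rangle$ permutes the $\langle U\rangle$-orbits. $\mathrm{Inv}_{N,k}$ is the set of $\sigma\in\mathrm{Sym}_N$ with $\sigma^2=1$ and exactly $N-2k$ fixed points, i.e. with exactly $k$ two-cycles. *)

theory Defs
  imports "HOL-Combinatorics.Combinatorics"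
begin

definition Sym :: "nat \<Rightarrow> (nat \<Rightarrow> nat) set" where
  "Sym n = {p. p permutes {1..n}}"

definition gen_orbit_rel :: "nat \<Rightarrow> (nat \<Rightarrow> nat) set \<Rightarrow> (nat \<times> nat) set" where
  "gen_orbit_rel n U =
     (let R = {(x, u x) | x u. x \<in> {1..n} \<and> u \<in> U} in (Id_on {1..n} \<union> R \<union> R\<inverse>)\<^sup>*)"

definition gen_orbits :: "nat \<Rightarrow> (nat \<Rightarrow> nat) set \<Rightarrow> nat set set" where
  "gen_orbits n U = {1..n} // gen_orbit_rel n U"

definition induced_orbits :: "(nat \<Rightarrow> nat) \<Rightarrow> nat set set \<Rightarrow> nat set set set" where
  "induced_orbits p \<O> = (\<lambda>C. {(((`) p) ^^ m) C | m. True}) ` \<O>"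

definition Inv :: "nat \<Rightarrow> nat \<Rightarrow> (nat \<Rightarrow> nat) set" where
  "Inv N k = {s. s \<in> Sym N \<and> s \<circ> s = id \<and> card {x \<in> {1..N}. s x = x} + 2 * k = N}"

end

theory Submission
  imports Defs
begin

lemma perm_in: "u permutes {1..n} \<Longrightarrow> x \<in> {1..n} \<Longrightarrow> u x \<in> {1..(n::nat)}"
  by (metis permutes_in_image)

lemma gor_closed:
  assumes U: "U \<subseteq> Sym n" and ab: "(a, b) \<in> gen_orbit_rel n U" and a: "a \<in> {1..n}"
  shows "b \<in> {1..n}"
  using ab a unfolding gen_orbit_rel_def Let_def
proof (induction rule: rtrancl_induct)
  case base then show ?case by simp
next
  case (step y z)
  then show ?case
  proof (elim UnE)
    assume "(y, z) \<in> Id_on {1..n}" then show ?thesis by auto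
  next
    assume "(y, z) \<in> {(x, u x) | x u. x \<in> {1..n} \<and> u \<in> U}"
    then obtain u where "z = u y" "u \<in> U" "y \<in> {1..n}" by blast
    then show ?thesis using U perm_in[of u n y] by (auto simp: Sym_def)
  next
    assume "(y, z) \<in> {(x, u x) | x u. x \<in> {1..n} \<and> u \<in> U}\<inverse>"
    then show ?thesis by auto
  qed
qed

lemma gor_sym:
  "(a, b) \<in> gen_orbit_rel n U \<Longrightarrow> (b, a) \<in> gen_orbit_rel n U"
proof -
  let ?R = "{(x, u x) | x u. x \<in> {1..n} \<and> u \<in> U}"
  have "sym (Id_on {1..n} \<union> ?R \<union> ?R\<inverse>)" by (auto simp: sym_def)
  then have "sym ((Id_on {1..n} \<union> ?R \<union> ?R\<inverse>)\<^sup>*)" by (rule sym_rtrancl)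
  then show "(a, b) \<in> gen_orbit_rel n U \<Longrightarrow> (b, a) \<in> gen_orbit_rel n U"
    unfolding gen_orbit_rel_def Let_def by (meson symD)
qed

lemma gor_trans:
  "(a, b) \<in> gen_orbit_rel n U \<Longrightarrow> (b, c) \<in> gen_orbit_rel n U \<Longrightarrow> (a, c) \<in> gen_orbit_rel n U"
  unfolding gen_orbit_rel_def Let_def by (meson rtrancl_trans)

lemma gor_map:
  assumes p: "p permutes {1..n}" and comm: "\<forall>u\<in>U. p \<circ> u = u \<circ> p"
    and ab: "(a, b) \<in> gen_orbit_rel n U"
  shows "(p a, p b) \<in> gen_orbit_rel n U"
  using ab unfolding gen_orbit_rel_def Let_def
proof (induction rule: rtrancl_induct)
  case base then show ?case by simp
next
  case (step y z)
  let ?R = "{(x, u x) | x u. x \<in> {1..n} \<and> u \<in> U}"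
  have "(p y, p z) \<in> Id_on {1..n} \<union> ?R \<union> ?R\<inverse>"
  proof -
    from step(2) consider "y = z" "y \<in> {1..n}" | x u where "y = x" "z = u x" "x \<in> {1..n}" "u \<in> U"
      | x u where "z = x" "y = u x" "x \<in> {1..n}" "u \<in> U" by blast
    then show ?thesis
    proof cases
      case 1 then show ?thesis using perm_in[OF p] by auto
    next
      case (2 x u)
      have "p (u x) = u (p x)" using comm 2 by (metis comp_apply)
      then show ?thesis using 2 perm_in[OF p, of x] by blast
    next
      case (3 x u)
      have "p (u x) = u (p x)" using comm 3 by (metis comp_apply)
      then show ?thesis using 3 perm_in[OF p, of x] by blast
    qed
  qed
  then show ?case using step(3) by (meson rtrancl.rtrancl_into_rtrancl)
qed

lemma gor_determ:
  assumes U: "U \<subseteq> Sym n" and comm: "\<forall>u\<in>U. p \<circ> u = u \<circ> p" "\<forall>u\<in>U. q \<circ> u = u \<circ> q"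
    and ab: "(a, b) \<in> gen_orbit_rel n U" and eq: "p a = q a"
  shows "p b = q b"
  using ab eq unfolding gen_orbit_rel_def Let_def
proof (induction rule: rtrancl_induct)
  case base then show ?case by simp
next
  case (step y z)
  then have IH: "p y = q y" by simp
  from step(2) consider "y = z" | x u where "y = x" "z = u x" "u \<in> U"
      | x u where "z = x" "y = u x" "u \<in> U" by blast
  then show ?case
  proof cases
    case 1 then show ?thesis using IH by simp
  next
    case (2 x u)
    have "p (u x) = u (p x)" "q (u x) = u (q x)" using comm 2 by (metis comp_apply)+
    then show ?thesis using 2 IH by simp
  next
    case (3 x u)
    have "p (u x) = u (p x)" "q (u x) = u (q x)" using comm 3 by (metis comp_apply)+
    moreover have "inj u" using U 3 by (auto simp: Sym_def permutes_inj)
    ultimately show ?thesis using 3 IH by (metis injD)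
  qed
qed

lemma count_invol:
  fixes Os :: "'a set" and \<tau> :: "'a \<Rightarrow> 'a"
  assumes fin: "finite Os" and cl: "\<forall>C\<in>Os. \<tau> C \<in> Os" and inv: "\<forall>C\<in>Os. \<tau> (\<tau> C) = C"
  shows "card {C\<in>Os. \<tau> C = C} + 2 * card {D \<in> (\<lambda>C. {C, \<tau> C}) ` Os. card D = 2} = card Os"
proof -
  let ?F = "{D \<in> (\<lambda>C. {C, \<tau> C}) ` Os. card D = 2}"
  let ?N = "{C\<in>Os. \<tau> C \<noteq> C}"
  have U: "\<Union>?F = ?N"
  proof
    show "\<Union>?F \<subseteq> ?N"
    proof
      fix X assume "X \<in> \<Union>?F"
      then obtain C where C: "C \<in> Os" "card {C, \<tau> C} = 2" "X \<in> {C, \<tau> C}" by auto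
      then have ne: "\<tau> C \<noteq> C" by (cases "\<tau> C = C") auto
      show "X \<in> ?N" using C ne inv cl by auto
    qed
  next
    show "?N \<subseteq> \<Union>?F"
    proof
      fix X assume X: "X \<in> ?N"
      then have "{X, \<tau> X} \<in> ?F" by auto
      then show "X \<in> \<Union>?F" by blast
    qed
  qed
  have pw: "pairwise disjnt ?F"
  proof (rule pairwiseI)
    fix D1 D2 assume D1: "D1 \<in> ?F" and D2: "D2 \<in> ?F" and ne: "D1 \<noteq> D2"
    from D1 obtain C1 where C1: "C1 \<in> Os" "D1 = {C1, \<tau> C1}" by auto
    from D2 obtain C2 where C2: "C2 \<in> Os" "D2 = {C2, \<tau> C2}" by auto
    show "disjnt D1 D2"
    proof (rule ccontr)
      assume "\<not> disjnt D1 D2"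
      then obtain X where "X \<in> D1" "X \<in> D2" by (auto simp: disjnt_def)
      then have "D1 = {X, \<tau> X}" "D2 = {X, \<tau> X}" using C1 C2 inv by auto
      then show False using ne by simp
    qed
  qed
  have finF: "finite ?F" using fin by auto
  have "card ?N = sum card ?F"
    using card_Union_disjoint[OF pw] U by auto
  also have "\<dots> = 2 * card ?F" by simp
  finally have N: "card ?N = 2 * card ?F" .
  have "card Os = card {C\<in>Os. \<tau> C = C} + card ?N"
  proof -
    have "Os = {C\<in>Os. \<tau> C = C} \<union> ?N" by auto
    moreover have "{C\<in>Os. \<tau> C = C} \<inter> ?N = {}" by auto
    ultimately show ?thesis using fin by (metis (no_types, lifting) card_Un_disjoint finite_Un)
  qed
  then show ?thesis using N by simp
qed

lemma transfer_inv:
  fixes Os :: "'a set" and \<tau> :: "'a \<Rightarrow> 'a"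
  assumes f: "bij_betw f {1..m} Os" and cl: "\<forall>C\<in>Os. \<tau> C \<in> Os" and inv: "\<forall>C\<in>Os. \<tau> (\<tau> C) = C"
    and K: "card {C\<in>Os. \<tau> C = C} + 2 * K = card Os"
  shows "(\<lambda>i. if i \<in> {1..m} then inv_into {1..m} f (\<tau> (f i)) else i) \<in> Inv m K"
proof -
  let ?g = "inv_into {1..m} f"
  define s where "s = (\<lambda>i. if i \<in> {1..m} then ?g (\<tau> (f i)) else i)"
  have fg: "\<And>y. y \<in> Os \<Longrightarrow> f (?g y) = y" using f by (meson bij_betw_inv_into_right)
  have gf: "\<And>i. i \<in> {1..m} \<Longrightarrow> ?g (f i) = i" using f by (meson bij_betw_inv_into_left)
  have gin: "\<And>y. y \<in> Os \<Longrightarrow> ?g y \<in> {1..m}" using f by (meson bij_betw_apply bij_betw_inv_into)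
  have fin: "\<And>i. i \<in> {1..m} \<Longrightarrow> f i \<in> Os" using f by (meson bij_betw_apply)
  have sin: "\<And>i. i \<in> {1..m} \<Longrightarrow> s i \<in> {1..m}" using gin fin cl by (simp add: s_def)
  have ss: "s \<circ> s = id"
  proof
    fix i show "(s \<circ> s) i = id i"
    proof (cases "i \<in> {1..m}")
      case True
      then have "s (s i) = ?g (\<tau> (f (?g (\<tau> (f i)))))" using sin[OF True] by (simp add: s_def)
      also have "\<dots> = i" using True fg fin cl inv gf by simp
      finally show ?thesis by simp
    next
      case False
      then have "s i = i" unfolding s_def by auto
      then show ?thesis by simp
    qed
  qed
  have "bij_betw s {1..m} {1..m}"
    by (rule bij_betw_byWitness[where f'=s]) (use ss sin in \<open>auto simp: fun_eq_iff\<close>)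
  then have perm: "s permutes {1..m}" by (rule bij_imp_permutes) (auto simp: s_def)
  have imgeq: "f ` {i \<in> {1..m}. s i = i} = {C\<in>Os. \<tau> C = C}"
  proof
    show "f ` {i \<in> {1..m}. s i = i} \<subseteq> {C\<in>Os. \<tau> C = C}"
    proof
      fix C assume "C \<in> f ` {i \<in> {1..m}. s i = i}"
      then obtain i where i: "i \<in> {1..m}" "?g (\<tau> (f i)) = i" "C = f i" by (auto simp: s_def)
      have "\<tau> (f i) \<in> Os" using fin cl i(1) by blast
      then have "\<tau> (f i) = f (?g (\<tau> (f i)))" using fg by metis
      also have "\<dots> = f i" using i(2) by simp
      finally show "C \<in> {C\<in>Os. \<tau> C = C}" using i fin by auto
    qed
  next
    show "{C\<in>Os. \<tau> C = C} \<subseteq> f ` {i \<in> {1..m}. s i = i}"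
    proof
      fix C assume C: "C \<in> {C\<in>Os. \<tau> C = C}"
      then have "?g C \<in> {1..m}" "f (?g C) = C" using gin fg by auto
      moreover have "s (?g C) = ?g C" using C calculation by (simp add: s_def)
      ultimately show "C \<in> f ` {i \<in> {1..m}. s i = i}" by (metis (mono_tags, lifting) image_eqI mem_Collect_eq)
    qed
  qed
  have injf: "inj_on f {i \<in> {1..m}. s i = i}"
    by (rule inj_on_subset[of f "{1..m}"]) (use f in \<open>auto simp: bij_betw_def\<close>)
  have c1: "card {i \<in> {1..m}. s i = i} = card {C\<in>Os. \<tau> C = C}"
    using card_image[OF injf] imgeq by simp
  have c2: "card Os = m" using f bij_betw_same_card by fastforce
  have "card {x \<in> {1..m}. s x = x} + 2 * K = m" using c1 c2 K by simp
  then have "s \<in> Inv m K" using perm ss unfolding Inv_def Sym_def by blast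
  then show ?thesis unfolding s_def .
qed


lemma orbs_iff: "C \<in> gen_orbits n U \<longleftrightarrow> (\<exists>x\<in>{1..n}. C = gen_orbit_rel n U `` {x})"
  by (auto simp: gen_orbits_def quotient_def)

lemma orb_self: "x \<in> gen_orbit_rel n U `` {x}"
  by (simp add: gen_orbit_rel_def Let_def)

lemma orb_sub: "U \<subseteq> Sym n \<Longrightarrow> x \<in> {1..n} \<Longrightarrow> gen_orbit_rel n U `` {x} \<subseteq> {1..n}"
  using gor_closed by blast

lemma orb_eq: "y \<in> gen_orbit_rel n U `` {x} \<Longrightarrow> gen_orbit_rel n U `` {y} = gen_orbit_rel n U `` {x}"
  using gor_sym gor_trans by blast

lemma orb_img:
  assumes p: "p permutes {1..n}" and comm: "\<forall>u\<in>U. p \<circ> u = u \<circ> p" and pp: "p \<circ> p = id"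
  shows "p ` (gen_orbit_rel n U `` {x}) = gen_orbit_rel n U `` {p x}"
proof
  show "p ` (gen_orbit_rel n U `` {x}) \<subseteq> gen_orbit_rel n U `` {p x}"
    using gor_map[OF p comm] by blast
next
  show "gen_orbit_rel n U `` {p x} \<subseteq> p ` (gen_orbit_rel n U `` {x})"
  proof
    fix y assume "y \<in> gen_orbit_rel n U `` {p x}"
    then have "(p (p x), p y) \<in> gen_orbit_rel n U" using gor_map[OF p comm] by blast
    moreover have "\<And>z. p (p z) = z" using pp by (metis comp_apply id_apply)
    ultimately have "p y \<in> gen_orbit_rel n U `` {x}" by simp
    moreover have "y = p (p y)" using pp by (metis comp_apply id_apply)
    ultimately show "y \<in> p ` (gen_orbit_rel n U `` {x})" by blast
  qed
qed

lemma orbs_img: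
  assumes p: "p permutes {1..n}" and comm: "\<forall>u\<in>U. p \<circ> u = u \<circ> p" and pp: "p \<circ> p = id"
    and C: "C \<in> gen_orbits n U"
  shows "p ` C \<in> gen_orbits n U"
proof -
  obtain x where x: "x \<in> {1..n}" "C = gen_orbit_rel n U `` {x}" using C orbs_iff by blast
  have "p x \<in> {1..n}" using perm_in[OF p x(1)] .
  then show ?thesis using orb_img[OF p comm pp] x orbs_iff by metis
qed

lemma orbs_fin: "U \<subseteq> Sym n \<Longrightarrow> finite (gen_orbits n U)"
proof -
  assume U: "U \<subseteq> Sym n"
  have "gen_orbits n U \<subseteq> Pow {1..n}" using orb_sub[OF U] orbs_iff by blast
  then show ?thesis by (meson finite_Pow_iff finite_atLeastAtMost finite_subset)
qed

lemma orbs_union: "U \<subseteq> Sym n \<Longrightarrow> \<Union>(gen_orbits n U) = {1..n}"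
proof -
  assume U: "U \<subseteq> Sym n"
  show ?thesis
  proof
    show "\<Union>(gen_orbits n U) \<subseteq> {1..n}" using orb_sub[OF U] orbs_iff by blast
    show "{1..n} \<subseteq> \<Union>(gen_orbits n U)" using orb_self orbs_iff by blast
  qed
qed

lemma orbs_disj: "pairwise disjnt (gen_orbits n U)"
proof (rule pairwiseI)
  fix C D assume C: "C \<in> gen_orbits n U" and D: "D \<in> gen_orbits n U" and ne: "C \<noteq> D"
  show "disjnt C D"
  proof (rule ccontr)
    assume "\<not> disjnt C D"
    then obtain z where "z \<in> C" "z \<in> D" by (auto simp: disjnt_def)
    then show False using C D ne orbs_iff orb_eq by metis
  qed
qed

lemma orbs_prod: "U \<subseteq> Sym n \<Longrightarrow> (\<Prod>C\<in>gen_orbits n U. card C) \<le> 2 ^ n"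
proof -
  assume U: "U \<subseteq> Sym n"
  have fin: "\<And>C. C \<in> gen_orbits n U \<Longrightarrow> finite C"
  proof -
    fix C assume "C \<in> gen_orbits n U"
    then have "C \<subseteq> {1..n}" using orb_sub[OF U] orbs_iff by blast
    then show "finite C" using finite_subset by blast
  qed
  have "sum card (gen_orbits n U) = card (\<Union>(gen_orbits n U))"
    using card_Union_disjoint[OF orbs_disj fin] by simp
  also have "\<dots> = n" using orbs_union[OF U] by simp
  finally have s: "sum card (gen_orbits n U) = n" .
  have "(\<Prod>C\<in>gen_orbits n U. card C) \<le> (\<Prod>C\<in>gen_orbits n U. (2::nat) ^ card C)"
    by (rule prod_mono) (simp add: less_exp less_imp_le)
  also have "\<dots> = 2 ^ (sum card (gen_orbits n U))" by (simp add: power_sum)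
  finally show ?thesis using s by simp
qed

lemma funpow_img_invol:
  assumes pp: "p \<circ> p = id"
  shows "(((`) p) ^^ j) C = (if even j then C else p ` C)"
proof (induction j)
  case 0 then show ?case by simp
next
  case (Suc j)
  have "p ` (p ` C) = C" using pp by (simp add: image_comp)
  then show ?case using Suc by auto
qed

lemma induced_invol:
  assumes pp: "p \<circ> p = id"
  shows "induced_orbits p Os = (\<lambda>C. {C, p ` C}) ` Os"
proof -
  have "\<And>C. {(((`) p) ^^ m) C | m. True} = {C, p ` C}"
  proof -
    fix C
    show "{(((`) p) ^^ m) C | m. True} = {C, p ` C}"
    proof
      show "{(((`) p) ^^ m) C | m. True} \<subseteq> {C, p ` C}" using funpow_img_invol[OF pp] by auto
      have "(((`) p) ^^ 0) C = C" "(((`) p) ^^ 1) C = p ` C" by simp_all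
      then show "{C, p ` C} \<subseteq> {(((`) p) ^^ m) C | m. True}" by blast
    qed
  qed
  then show ?thesis unfolding induced_orbits_def by simp
qed


theorem lemma3p1:
  fixes k n :: nat and U :: "(nat \<Rightarrow> nat) set"
  assumes "U \<subseteq> Sym n"
  shows "card {p. p \<in> Sym n \<and> p \<circ> p = id \<and> (\<forall>u\<in>U. p \<circ> u = u \<circ> p) \<and>
                  card {D \<in> induced_orbits p (gen_orbits n U). card D = 2} = k}
         \<le> 2 ^ n * card (Inv (card (gen_orbits n U)) k)"
proof -
  note U = assms
  define Os where "Os = gen_orbits n U"
  define r where "r = gen_orbit_rel n U"
  define P where "P = {p. p \<in> Sym n \<and> p \<circ> p = id \<and> (\<forall>u\<in>U. p \<circ> u = u \<circ> p) \<and>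
                  card {D \<in> induced_orbits p (gen_orbits n U). card D = 2} = k}"
  define m where "m = card Os"
  define T where "T = (\<lambda>p::nat\<Rightarrow>nat. restrict (\<lambda>C. p ` C) Os)"
  define Sg where "Sg = T ` P"
  define F where "F = (\<lambda>t. {p\<in>P. T p = t})"
  have finOs: "finite Os" using orbs_fin[OF U] by (simp add: Os_def)
  have Pprops: "p permutes {1..n}" "\<forall>u\<in>U. p \<circ> u = u \<circ> p" "p \<circ> p = id"
     "card {D \<in> induced_orbits p Os. card D = 2} = k" if "p \<in> P" for p
    using that by (auto simp: P_def Sym_def Os_def)
  have finP: "finite P"
  proof -
    have "P \<subseteq> {p. p permutes {1..n}}" using Pprops by blast
    then show ?thesis using finite_permutations finite_subset by blast
  qed
  have finSg: "finite Sg" using finP by (simp add: Sg_def)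
  have Tcl: "t C \<in> Os" "t (t C) = C" if tS: "t \<in> Sg" "C \<in> Os" for t C
  proof -
    obtain p where p: "p \<in> P" "t = T p" using tS Sg_def by blast
    have pC: "p ` C \<in> Os" using orbs_img[OF Pprops(1-3)[OF p(1)]] tS(2) by (simp add: Os_def)
    then show "t C \<in> Os" using p tS by (simp add: T_def)
    have "p ` (p ` C) = C" using Pprops(3)[OF p(1)] by (simp add: image_comp)
    then show "t (t C) = C" using p tS pC by (simp add: T_def)
  qed
  have fib: "card (F t) \<le> 2 ^ n" if t: "t \<in> Sg" for t
  proof -
    obtain p0 where p0: "p0 \<in> P" "t = T p0" using t Sg_def by blast
    define phi where "phi = (\<lambda>p::nat\<Rightarrow>nat. restrict (\<lambda>C. p (Min C)) Os)"
    have Cprops: "finite C" "C \<noteq> {}" "Min C \<in> C" "(x, Min C) \<in> r" "Min C \<in> {1..n}"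
      if "C \<in> Os" "C = r `` {x}" "x \<in> {1..n}" for C x
    proof -
      have sub: "C \<subseteq> {1..n}" using orb_sub[OF U] that by (simp add: r_def)
      then show fC: "finite C" using finite_subset by blast
      show ne: "C \<noteq> {}" using orb_self that by (auto simp: r_def)
      show "Min C \<in> C" using Min_in fC ne by blast
      then show "(x, Min C) \<in> r" "Min C \<in> {1..n}" using that sub by auto
    qed
    have "phi ` F t \<subseteq> PiE Os t"
    proof
      fix g assume "g \<in> phi ` F t"
      then obtain p where p: "p \<in> P" "T p = t" "g = phi p" by (auto simp: F_def)
      show "g \<in> PiE Os t"
      proof (rule PiE_I)
        fix C assume C: "C \<in> Os"
        then obtain x where x: "x \<in> {1..n}" "C = r `` {x}" using orbs_iff[of C n U] unfolding Os_def r_def by blast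
        have "p (Min C) \<in> p ` C" using Cprops[OF C x(2,1)] by blast
        then show "g C \<in> t C" using p C by (auto simp: phi_def T_def)
      next
        fix C assume "C \<notin> Os" then show "g C = undefined" using p by (simp add: phi_def)
      qed
    qed
    moreover have "inj_on phi (F t)"
    proof (rule inj_onI)
      fix p q assume p: "p \<in> F t" and q: "q \<in> F t" and eq: "phi p = phi q"
      have pP: "p \<in> P" and qP: "q \<in> P" using p q by (auto simp: F_def)
      show "p = q"
      proof
        fix x show "p x = q x"
        proof (cases "x \<in> {1..n}")
          case False
          then show ?thesis using Pprops(1)[OF pP] Pprops(1)[OF qP] by (simp add: permutes_not_in)
        next
          case True
          define C where "C = r `` {x}"
          have C: "C \<in> Os" using True orbs_iff[of C n U] unfolding C_def Os_def r_def by blast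
          have "p (Min C) = q (Min C)" using fun_cong[OF eq, of C] C by (simp add: phi_def)
          moreover have "(Min C, x) \<in> gen_orbit_rel n U"
            using Cprops(4)[OF C C_def True] gor_sym by (simp add: r_def)
          ultimately show ?thesis
            using gor_determ[OF U Pprops(2)[OF pP] Pprops(2)[OF qP]] by blast
        qed
      qed
    qed
    moreover have "finite (PiE Os t)"
    proof (rule finite_PiE[OF finOs])
      fix C assume C: "C \<in> Os"
      then obtain x where x: "x \<in> {1..n}" "C = r `` {x}" using orbs_iff[of C n U] unfolding Os_def r_def by blast
      have "finite C" using Cprops(1)[OF C x(2,1)] .
      then show "finite (t C)" using C p0 by (simp add: T_def)
    qed
    ultimately have "card (F t) \<le> card (PiE Os t)"
      using card_inj_on_le by blast
    also have "\<dots> = (\<Prod>C\<in>Os. card (t C))" by (rule card_PiE[OF finOs])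
    also have "\<dots> = (\<Prod>C\<in>Os. card C)"
    proof (rule prod.cong)
      fix C assume C: "C \<in> Os"
      have "inj_on p0 C" using Pprops(1)[OF p0(1)] by (meson permutes_inj inj_on_subset subset_UNIV)
      then show "card (t C) = card C" using C p0 by (simp add: T_def card_image)
    qed simp
    also have "\<dots> \<le> 2 ^ n" using orbs_prod[OF U] by (simp add: Os_def)
    finally show ?thesis .
  qed
  obtain f where f: "bij_betw f {1..m} Os" using ex_bij_betw_nat_finite_1[OF finOs] m_def by blast
  define g where "g = inv_into {1..m} f"
  define psi where "psi = (\<lambda>t::nat set \<Rightarrow> nat set. (\<lambda>i. if i \<in> {1..m} then g (t (f i)) else i))"
  have psi_in: "psi ` Sg \<subseteq> Inv m k"
  proof
    fix s assume "s \<in> psi ` Sg"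
    then obtain t where t: "t \<in> Sg" "s = psi t" by blast
    obtain p where p: "p \<in> P" "t = T p" using t Sg_def by blast
    have eqimg: "(\<lambda>C. {C, t C}) ` Os = induced_orbits p Os"
      using induced_invol[OF Pprops(3)[OF p(1)]] p by (auto simp: T_def)
    have "card {C\<in>Os. t C = C} + 2 * card {D \<in> (\<lambda>C. {C, t C}) ` Os. card D = 2} = card Os"
      using count_invol[OF finOs] Tcl[OF t(1)] by blast
    then have "card {C\<in>Os. t C = C} + 2 * k = card Os"
      using eqimg Pprops(4)[OF p(1)] by simp
    then have "(\<lambda>i. if i \<in> {1..m} then inv_into {1..m} f (t (f i)) else i) \<in> Inv m k"
      using transfer_inv[OF f, of t k] Tcl[OF t(1)] by blast
    then show "s \<in> Inv m k"
      using t(2) unfolding psi_def g_def by simp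
  qed
  have psi_inj: "inj_on psi Sg"
  proof (rule inj_onI)
    fix t1 t2 assume t1: "t1 \<in> Sg" and t2: "t2 \<in> Sg" and eq: "psi t1 = psi t2"
    show "t1 = t2"
    proof
      fix C show "t1 C = t2 C"
      proof (cases "C \<in> Os")
        case False
        then show ?thesis using t1 t2 by (auto simp: Sg_def T_def)
      next
        case True
        define i where "i = g C"
        have i1: "i \<in> {1..m}" using f True unfolding i_def g_def
          by (meson bij_betw_apply bij_betw_inv_into)
        have i2: "f i = C" using f True unfolding i_def g_def
          by (meson bij_betw_inv_into_right)
        note i = i1 i2
        have "g (t1 C) = g (t2 C)" using fun_cong[OF eq, of i] i by (simp add: psi_def)
        moreover have "inj_on g Os" using f unfolding g_def by (meson bij_betw_imp_inj_on bij_betw_inv_into)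
        ultimately show ?thesis using Tcl(1)[OF t1 True] Tcl(1)[OF t2 True] by (meson inj_onD)
      qed
    qed
  qed
  have finInv: "finite (Inv m k)"
  proof -
    have "Inv m k \<subseteq> {s. s permutes {1..m}}" by (auto simp: Inv_def Sym_def)
    then show ?thesis using finite_permutations finite_subset by blast
  qed
  have cSg: "card Sg \<le> card (Inv m k)" using card_inj_on_le[OF psi_inj psi_in finInv] .
  have "P = (\<Union>t\<in>Sg. F t)" by (auto simp: F_def Sg_def)
  then have "card P \<le> (\<Sum>t\<in>Sg. card (F t))" using card_UN_le[OF finSg, of F] by simp
  also have "\<dots> \<le> (\<Sum>t\<in>Sg. 2 ^ n)" using fib by (meson sum_mono)
  also have "\<dots> = card Sg * 2 ^ n" by simp
  also have "\<dots> \<le> card (Inv m k) * 2 ^ n" using cSg by simp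
  finally show ?thesis by (simp add: P_def m_def Os_def mult.commute)
qed

end
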